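(* Let $D \subset \mathbb{C}$ be a domain. For all $\alpha > -1$, $$\mathrm{h}(D) \leq \frac{\mathrm{b}_{\alpha}(D)}{\alpha+2}.$$
   Context: $H^p$ is the Hardy space and $A^p_\alpha$ ($0<p<\infty$, $\alpha>-1$) the weighted Bergman space of holomorphic $f$ on $\mathbb{D}$ with $\int_{\mathbb{D}}|f|^p(1-|z|)^\alpha dA<\infty$. $\mathrm{h}(D)=\inf\{\mathrm{h}(f): f\colon\mathbb{D}\to D \text{ holomorphic}\}$ with $\mathrm{h}(f)=\sup(\{0\}\cup\{p>0: f\in H^p\})$, and $\mathrm{b}_\alpha(D)=\sup(\{0\}\cup\{p>0: \mathrm{Hol}(\mathbb{D},D)\subset A^p_\alpha\})=\inf\{\mathrm{b}_\alpha(f): f\in\mathrm{Hol}(\mathbb{D},D)\}$ with $\mathrm{b}_\alpha(f)=\sup(\{0\}\cup\{p>0: f\in A^p_\alpha\})$. *)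

theory Defs
  imports "HOL-Analysis.Analysis" "HOL-Complex_Analysis.Complex_Analysis"
begin

definition in_hardy :: "real \<Rightarrow> (complex \<Rightarrow> complex) \<Rightarrow> bool" where
  "in_hardy p f \<longleftrightarrow> f holomorphic_on ball 0 1 \<and>
     (SUP r\<in>{0<..<1}. \<integral>\<^sup>+ t. ennreal (norm (f (complex_of_real r * cis t)) powr p)
        * indicator {0..2*pi} t \<partial>lborel) < \<infinity>"

definition in_bergman :: "real \<Rightarrow> real \<Rightarrow> (complex \<Rightarrow> complex) \<Rightarrow> bool" where
  "in_bergman p \<alpha> f \<longleftrightarrow> f holomorphic_on ball 0 1 \<and>
     (\<integral>\<^sup>+ z. ennreal (norm (f z) powr p * (1 - norm z) powr \<alpha>)
        * indicator (ball 0 1) z \<partial>lborel) < \<infinity>"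

definition Hol_disc :: "complex set \<Rightarrow> (complex \<Rightarrow> complex) set" where
  "Hol_disc S = {f. f holomorphic_on ball 0 1 \<and> f ` ball 0 1 \<subseteq> S}"

definition hardy_number :: "(complex \<Rightarrow> complex) \<Rightarrow> ereal" where
  "hardy_number f = Sup ({0} \<union> {ereal p |p. p > 0 \<and> in_hardy p f})"

definition hardy_number_dom :: "complex set \<Rightarrow> ereal" where
  "hardy_number_dom D = Inf (hardy_number ` Hol_disc D)"

definition bergman_number_dom :: "real \<Rightarrow> complex set \<Rightarrow> ereal" where
  "bergman_number_dom \<alpha> D =
     Sup ({0} \<union> {ereal p |p. p > 0 \<and> (\<forall>f\<in>Hol_disc D. in_bergman p \<alpha> f)})"

end

theory Submission
  imports Defs
begin


lemma measurable_Complex_pair[measurable]: "(\<lambda>p::real\<times>real. Complex (fst p) (snd p)) \<in> borel_measurable (lborel \<Otimes>\<^sub>M lborel)"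
  unfolding Complex_eq by measurable

lemma lborel_complex: "(lborel :: complex measure) = distr (lborel \<Otimes>\<^sub>M lborel) borel (\<lambda>p. Complex (fst p) (snd p))"
proof (rule lborel_eqI)
  fix l u :: complex
  assume le: "\<And>b. b \<in> Basis \<Longrightarrow> l \<bullet> b \<le> u \<bullet> b"
  then have le1: "Re l \<le> Re u" and le2: "Im l \<le> Im u"
    using le[of 1] le[of \<i>] by (auto simp: Basis_complex_def inner_complex_def)
  have pre: "(\<lambda>p. Complex (fst p) (snd p)) -` box l u \<inter> space (lborel \<Otimes>\<^sub>M lborel) = {Re l<..<Re u} \<times> {Im l<..<Im u}"
    by (auto simp: box_def Basis_complex_def inner_complex_def space_pair_measure)
  have "emeasure (distr (lborel \<Otimes>\<^sub>M lborel) borel (\<lambda>p. Complex (fst p) (snd p))) (box l u)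
     = emeasure (lborel \<Otimes>\<^sub>M lborel) ({Re l<..<Re u} \<times> {Im l<..<Im u})"
    by (subst emeasure_distr) (auto simp: pre)
  also have "\<dots> = ennreal (Re u - Re l) * ennreal (Im u - Im l)"
    using le1 le2 by (simp add: lborel.emeasure_pair_measure_Times)
  also have "\<dots> = ennreal (\<Prod>b\<in>Basis. (u - l) \<bullet> b)"
    using le1 le2 by (simp add: Basis_complex_def inner_complex_def ennreal_mult)
  finally show "emeasure (distr (lborel \<Otimes>\<^sub>M lborel) borel (\<lambda>p. Complex (fst p) (snd p))) (box l u) = (\<Prod>b\<in>Basis. (u - l) \<bullet> b)" .
qed simp

lemma nn_integral_complex_Fubini:
  fixes g :: "complex \<Rightarrow> ennreal"
  assumes [measurable]: "g \<in> borel_measurable borel"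
  shows "(\<integral>\<^sup>+z. g z \<partial>lborel) = (\<integral>\<^sup>+y. (\<integral>\<^sup>+x. g (Complex x y) \<partial>lborel) \<partial>lborel)"
    and "(\<integral>\<^sup>+z. g z \<partial>lborel) = (\<integral>\<^sup>+x. (\<integral>\<^sup>+y. g (Complex x y) \<partial>lborel) \<partial>lborel)"
proof -
  have E: "(\<integral>\<^sup>+z. g z \<partial>lborel) = (\<integral>\<^sup>+p. g (Complex (fst p) (snd p)) \<partial>(lborel \<Otimes>\<^sub>M lborel))"
    by (subst lborel_complex) (simp add: nn_integral_distr)
  then show "(\<integral>\<^sup>+z. g z \<partial>lborel) = (\<integral>\<^sup>+y. (\<integral>\<^sup>+x. g (Complex x y) \<partial>lborel) \<partial>lborel)"
    by (simp add: lborel_pair.nn_integral_snd[symmetric] case_prod_beta)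
  from E show "(\<integral>\<^sup>+z. g z \<partial>lborel) = (\<integral>\<^sup>+x. (\<integral>\<^sup>+y. g (Complex x y) \<partial>lborel) \<partial>lborel)"
    by (simp add: lborel.nn_integral_fst[symmetric] case_prod_beta)
qed



lemma nn_integral_translate:
  fixes f :: "'a::euclidean_space \<Rightarrow> ennreal"
  assumes [measurable]: "f \<in> borel_measurable borel"
  shows "(\<integral>\<^sup>+x. f (c + x) \<partial>lborel) = (\<integral>\<^sup>+x. f x \<partial>lborel)"
proof -
  have "(\<integral>\<^sup>+x. f x \<partial>lborel) = (\<integral>\<^sup>+x. f x \<partial>(distr lborel borel ((+) c)))"
    by (simp add: lborel_distr_plus)
  also have "\<dots> = (\<integral>\<^sup>+x. f (c + x) \<partial>lborel)"
    by (simp add: nn_integral_distr)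
  finally show ?thesis ..
qed

definition shx :: "real \<Rightarrow> complex \<Rightarrow> complex" where
  "shx a z = Complex (Re z + a * Im z) (Im z)"
definition shy :: "real \<Rightarrow> complex \<Rightarrow> complex" where
  "shy b z = Complex (Re z) (Im z + b * Re z)"

lemma shx_measurable[measurable]: "shx a \<in> borel_measurable borel"
  unfolding shx_def Complex_eq by measurable
lemma shy_measurable[measurable]: "shy a \<in> borel_measurable borel"
  unfolding shy_def Complex_eq by measurable

lemma Complex_measurable1[measurable]: "Complex x \<in> borel_measurable borel"
  unfolding Complex_eq by measurable
lemma Complex_measurable2[measurable]: "(\<lambda>y. Complex y x) \<in> borel_measurable borel"
  unfolding Complex_eq by measurable

lemma nn_integral_shx:
  fixes g :: "complex \<Rightarrow> ennreal"
  assumes [measurable]: "g \<in> borel_measurable borel"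
  shows "(\<integral>\<^sup>+z. g (shx a z) \<partial>lborel) = (\<integral>\<^sup>+z. g z \<partial>lborel)"
proof -
  have "(\<integral>\<^sup>+z. g (shx a z) \<partial>lborel) = (\<integral>\<^sup>+y. (\<integral>\<^sup>+x. g (Complex (a * y + x) y) \<partial>lborel) \<partial>lborel)"
    by (subst nn_integral_complex_Fubini(1)) (measurable, simp add: shx_def add.commute)
  also have "\<dots> = (\<integral>\<^sup>+y. (\<integral>\<^sup>+x. g (Complex x y) \<partial>lborel) \<partial>lborel)"
    by (rule nn_integral_cong, rule nn_integral_translate[where f = "\<lambda>x. g (Complex x _)"]) measurable
  also have "\<dots> = (\<integral>\<^sup>+z. g z \<partial>lborel)"
    by (simp add: nn_integral_complex_Fubini(1))
  finally show ?thesis .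
qed

lemma nn_integral_shy:
  fixes g :: "complex \<Rightarrow> ennreal"
  assumes [measurable]: "g \<in> borel_measurable borel"
  shows "(\<integral>\<^sup>+z. g (shy a z) \<partial>lborel) = (\<integral>\<^sup>+z. g z \<partial>lborel)"
proof -
  have "(\<integral>\<^sup>+z. g (shy a z) \<partial>lborel) = (\<integral>\<^sup>+x. (\<integral>\<^sup>+y. g (Complex x (a * x + y)) \<partial>lborel) \<partial>lborel)"
    by (subst nn_integral_complex_Fubini(2)) (measurable, simp add: shy_def add.commute)
  also have "\<dots> = (\<integral>\<^sup>+x. (\<integral>\<^sup>+y. g (Complex x y) \<partial>lborel) \<partial>lborel)"
    by (rule nn_integral_cong, rule nn_integral_translate[where f = "\<lambda>y. g (Complex _ y)"]) measurable
  also have "\<dots> = (\<integral>\<^sup>+z. g z \<partial>lborel)"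
    by (simp add: nn_integral_complex_Fubini(2))
  finally show ?thesis .
qed

lemma rot_shear:
  assumes "norm w = 1" "w \<noteq> -1"
  shows "w * z = shx (- Im w / (1 + Re w)) (shy (Im w) (shx (- Im w / (1 + Re w)) z))"
proof -
  have w2: "(Re w)^2 + (Im w)^2 = 1" using assms(1)
    by (metis cmod_power2 norm_one power_one)
  have "1 + Re w \<noteq> 0"
  proof
    assume "1 + Re w = 0"
    then have "Re w = -1" by simp
    with w2 have "Im w = 0" by simp
    with \<open>Re w = -1\<close> assms(2) show False by (simp add: complex_eq_iff)
  qed
  define a where "a = - Im w / (1 + Re w)"
  have h1: "1 + a * Im w = Re w"
    using \<open>1 + Re w \<noteq> 0\<close> w2 unfolding a_def
    by (simp add: field_simps power2_eq_square)
  have h2: "2 * a + a * a * Im w = - Im w"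
  proof -
    have "2 * a + a * a * Im w = a * (1 + (1 + a * Im w))" by (simp add: algebra_simps)
    also have "\<dots> = a * (1 + Re w)" using h1 by simp
    also have "\<dots> = - Im w" using \<open>1 + Re w \<noteq> 0\<close> unfolding a_def by simp
    finally show ?thesis .
  qed
  have "Re z + a * Im z + a * (Im z + Im w * (Re z + a * Im z)) = Re z * (1 + a * Im w) + Im z * (2 * a + a * a * Im w)"
    by (simp add: algebra_simps)
  also have "\<dots> = Re w * Re z - Im w * Im z" using h1 h2 by simp
  finally have e1: "Re z + a * Im z + a * (Im z + Im w * (Re z + a * Im z)) = Re w * Re z - Im w * Im z" .
  have e2: "Im z + Im w * (Re z + a * Im z) = Im w * Re z + Re w * Im z"
    using h1 by (simp add: algebra_simps) (metis add.commute distrib_left mult.commute mult.left_commute mult_1)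
  show ?thesis
    unfolding a_def[symmetric] using e1 e2 by (simp add: shx_def shy_def complex_eq_iff)
qed

lemma nn_integral_rot1:
  fixes g :: "complex \<Rightarrow> ennreal"
  assumes [measurable]: "g \<in> borel_measurable borel" and "norm w = 1" "w \<noteq> -1"
  shows "(\<integral>\<^sup>+z. g (w * z) \<partial>lborel) = (\<integral>\<^sup>+z. g z \<partial>lborel)"
proof -
  define a where "a = - Im w / (1 + Re w)"
  have "(\<integral>\<^sup>+z. g (w * z) \<partial>lborel) = (\<integral>\<^sup>+z. (\<lambda>u. g (shx a (shy (Im w) u))) (shx a z) \<partial>lborel)"
    using assms(2,3) by (simp add: rot_shear a_def)
  also have "\<dots> = (\<integral>\<^sup>+z. (\<lambda>u. g (shx a u)) (shy (Im w) z) \<partial>lborel)"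
    by (rule nn_integral_shx) measurable
  also have "\<dots> = (\<integral>\<^sup>+z. g (shx a z) \<partial>lborel)"
    by (rule nn_integral_shy) measurable
  also have "\<dots> = (\<integral>\<^sup>+z. g z \<partial>lborel)"
    by (rule nn_integral_shx) measurable
  finally show ?thesis .
qed

lemma nn_integral_rot:
  fixes g :: "complex \<Rightarrow> ennreal"
  assumes [measurable]: "g \<in> borel_measurable borel" and "norm w = 1"
  shows "(\<integral>\<^sup>+z. g (w * z) \<partial>lborel) = (\<integral>\<^sup>+z. g z \<partial>lborel)"
proof (cases "w = -1")
  case True
  have "(\<integral>\<^sup>+z. g (w * z) \<partial>lborel) = (\<integral>\<^sup>+z. (\<lambda>u. g (\<i> * u)) (\<i> * z) \<partial>lborel)"
    using True by (simp add: mult.assoc[symmetric])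
  also have "\<dots> = (\<integral>\<^sup>+z. g (\<i> * z) \<partial>lborel)"
    by (rule nn_integral_rot1) (auto simp: complex_eq_iff)
  also have "\<dots> = (\<integral>\<^sup>+z. g z \<partial>lborel)"
    by (rule nn_integral_rot1) (auto simp: complex_eq_iff)
  finally show ?thesis .
qed (use assms nn_integral_rot1 in auto)



lemma cis_measurable[measurable]: "cis \<in> borel_measurable borel"
  unfolding cis_conv_exp by measurable

lemma nn_integral_periodic_shift0:
  fixes F :: "real \<Rightarrow> ennreal"
  assumes [measurable]: "F \<in> borel_measurable borel"
    and per: "\<And>t. F (t + 2*pi) = F t"
    and th: "0 \<le> \<theta>" "\<theta> \<le> 2*pi"
  shows "(\<integral>\<^sup>+t. F (t + \<theta>) * indicator {0..2*pi} t \<partial>lborel) = (\<integral>\<^sup>+t. F t * indicator {0..2*pi} t \<partial>lborel)"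
proof -
  have "(\<integral>\<^sup>+t. F (t + \<theta>) * indicator {0..2*pi} t \<partial>lborel)
      = (\<integral>\<^sup>+t. (\<lambda>s. F s * indicator {\<theta>..2*pi+\<theta>} s) (\<theta> + t) \<partial>lborel)"
    by (intro nn_integral_cong) (auto simp: indicator_def add.commute)
  also have "\<dots> = (\<integral>\<^sup>+s. F s * indicator {\<theta>..2*pi+\<theta>} s \<partial>lborel)"
    by (rule nn_integral_translate) measurable
  also have "\<dots> = (\<integral>\<^sup>+s. F s * indicator {\<theta>..2*pi} s + F s * indicator {2*pi<..2*pi+\<theta>} s \<partial>lborel)"
    using th by (intro nn_integral_cong) (auto simp: indicator_def)
  also have "\<dots> = (\<integral>\<^sup>+s. F s * indicator {\<theta>..2*pi} s \<partial>lborel) + (\<integral>\<^sup>+s. F s * indicator {2*pi<..2*pi+\<theta>} s \<partial>lborel)"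
    by (rule nn_integral_add) measurable
  also have "(\<integral>\<^sup>+s. F s * indicator {2*pi<..2*pi+\<theta>} s \<partial>lborel)
      = (\<integral>\<^sup>+s. (\<lambda>s. F s * indicator {2*pi<..2*pi+\<theta>} s) (2*pi + s) \<partial>lborel)"
    by (rule nn_integral_translate[symmetric]) measurable
  also have "\<dots> = (\<integral>\<^sup>+s. F s * indicator {0<..\<theta>} s \<partial>lborel)"
    using per by (intro nn_integral_cong) (auto simp: indicator_def add.commute)
  also have "(\<integral>\<^sup>+s. F s * indicator {\<theta>..2*pi} s \<partial>lborel) + (\<integral>\<^sup>+s. F s * indicator {0<..\<theta>} s \<partial>lborel)
      = (\<integral>\<^sup>+s. F s * indicator {\<theta>..2*pi} s + F s * indicator {0<..\<theta>} s \<partial>lborel)"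
    by (rule nn_integral_add[symmetric]) measurable
  also have "\<dots> = (\<integral>\<^sup>+s. F s * indicator {0..2*pi} s \<partial>lborel)"
  proof (rule nn_integral_cong_AE)
    show "AE s in lborel. F s * indicator {\<theta>..2*pi} s + F s * indicator {0<..\<theta>} s = F s * indicator {0..2*pi} s"
      by (rule AE_mp[OF AE_lborel_singleton[of 0]], rule AE_mp[OF AE_lborel_singleton[of \<theta>]], rule AE_I2) (use th in \<open>auto simp: indicator_def\<close>)
  qed
  finally show ?thesis .
qed

lemma nn_integral_periodic_shift:
  fixes F :: "real \<Rightarrow> ennreal"
  assumes [measurable]: "F \<in> borel_measurable borel"
    and per: "\<And>t. F (t + 2*pi) = F t"
    and th: "-2*pi \<le> \<theta>" "\<theta> \<le> 2*pi"
  shows "(\<integral>\<^sup>+t. F (t + \<theta>) * indicator {0..2*pi} t \<partial>lborel) = (\<integral>\<^sup>+t. F t * indicator {0..2*pi} t \<partial>lborel)"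
proof (cases "0 \<le> \<theta>")
  case True
  then show ?thesis using nn_integral_periodic_shift0[OF assms(1) per] th by simp
next
  case False
  have "(\<integral>\<^sup>+t. F (t + \<theta>) * indicator {0..2*pi} t \<partial>lborel) = (\<integral>\<^sup>+t. F (t + (\<theta> + 2*pi)) * indicator {0..2*pi} t \<partial>lborel)"
    using per by (metis add.assoc)
  also have "\<dots> = (\<integral>\<^sup>+t. F t * indicator {0..2*pi} t \<partial>lborel)"
    using False th by (intro nn_integral_periodic_shift0[OF assms(1) per]) auto
  finally show ?thesis .
qed

lemma nn_integral_angular:
  fixes u :: "complex \<Rightarrow> ennreal"
  assumes [measurable]: "u \<in> borel_measurable borel"
  shows "(\<integral>\<^sup>+t. u (cis t * z) * indicator {0..2*pi} t \<partial>lborel)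
       = (\<integral>\<^sup>+t. u (of_real (norm z) * cis t) * indicator {0..2*pi} t \<partial>lborel)"
proof -
  define \<theta> where "\<theta> = Arg2pi z"
  have th: "0 \<le> \<theta>" "\<theta> < 2*pi" and z: "z = of_real (norm z) * cis \<theta>"
    using Arg2pi[of z] unfolding \<theta>_def is_Arg_def by (auto simp: cis_conv_exp)
  define F where "F t = u (of_real (norm z) * cis t)" for t
  have [measurable]: "F \<in> borel_measurable borel" unfolding F_def by measurable
  have per: "F (t + 2*pi) = F t" for t
    unfolding F_def by (simp add: cis.ctr complex_eq_iff)
  have "(\<integral>\<^sup>+t. u (cis t * z) * indicator {0..2*pi} t \<partial>lborel) = (\<integral>\<^sup>+t. F (t + \<theta>) * indicator {0..2*pi} t \<partial>lborel)"
  proof (intro nn_integral_cong)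
    fix t
    have "cis t * z = of_real (norm z) * cis (t + \<theta>)"
      by (subst z) (simp add: cis_mult[symmetric] mult.left_commute)
    then show "u (cis t * z) * indicator {0..2*pi} t = F (t + \<theta>) * indicator {0..2*pi} t"
      by (simp add: F_def)
  qed
  also have "\<dots> = (\<integral>\<^sup>+t. F t * indicator {0..2*pi} t \<partial>lborel)"
    using th by (intro nn_integral_periodic_shift per) auto
  finally show ?thesis by (simp add: F_def)
qed

lemma nn_integral_symmetrize:
  fixes g :: "complex \<Rightarrow> ennreal"
  assumes [measurable]: "g \<in> borel_measurable borel"
  shows "ennreal (2*pi) * (\<integral>\<^sup>+z. g z \<partial>lborel)
       = (\<integral>\<^sup>+z. (\<integral>\<^sup>+t. g (cis t * z) * indicator {0..2*pi} t \<partial>lborel) \<partial>lborel)"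
proof -
  have "(\<integral>\<^sup>+z. (\<integral>\<^sup>+t. g (cis t * z) * indicator {0..2*pi} t \<partial>lborel) \<partial>lborel)
      = (\<integral>\<^sup>+t. (\<integral>\<^sup>+z. g (cis t * z) * indicator {0..2*pi} t \<partial>lborel) \<partial>lborel)"
    by (rule lborel_pair.Fubini'[symmetric]) measurable
  also have "\<dots> = (\<integral>\<^sup>+t. (\<integral>\<^sup>+z. g z \<partial>lborel) * indicator {0..2*pi} t \<partial>lborel)"
    by (intro nn_integral_cong) (simp add: nn_integral_multc nn_integral_rot norm_cis)
  also have "\<dots> = (\<integral>\<^sup>+z. g z \<partial>lborel) * ennreal (2*pi)"
    by (simp add: nn_integral_cmult_indicator mult.commute)
  finally show ?thesis by (simp add: mult.commute)
qed



lemma has_integral_2pi_r: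
  assumes "0 \<le> a" "a \<le> b"
  shows "((\<lambda>r::real. 2*pi*r) has_integral (pi*b^2 - pi*a^2)) {a<..<b}"
proof -
  have "((\<lambda>r::real. 2*pi*r) has_integral (pi*b^2 - pi*a^2)) {a..b}"
  proof (rule fundamental_theorem_of_calculus[where f = "\<lambda>r. pi * r^2"])
    show "a \<le> b" by fact
    fix x assume "x \<in> {a..b}"
    show "((\<lambda>r. pi * r^2) has_vector_derivative 2*pi*x) (at x within {a..b})"
      unfolding has_real_derivative_iff_has_vector_derivative[symmetric]
      by (auto intro!: derivative_eq_intros)
  qed
  then show ?thesis using has_integral_open_interval[of "\<lambda>r::real. 2*pi*r" _ a b] by simp
qed

lemma emeasure_ball_complex: "r \<ge> 0 \<Longrightarrow> emeasure lborel (ball (c::complex) r) = ennreal (pi * r^2)"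
  using emeasure_ball[of r c] by (simp add: unit_ball_vol_2)
lemma emeasure_cball_complex: "r \<ge> 0 \<Longrightarrow> emeasure lborel (cball (c::complex) r) = ennreal (pi * r^2)"
  using emeasure_cball[of r c] by (simp add: unit_ball_vol_2)

lemma ball_borel_c[measurable]: "ball (0::complex) 1 \<in> sets borel" by simp
lemma norm_pre_borel[measurable]: "(norm -` {x<..} :: complex set) \<in> sets borel"
  using measurable_sets_borel[of "norm :: complex \<Rightarrow> real" borel "{x<..}"] by simp

definition radM :: "real measure" where
  "radM = distr (density lborel (indicator (ball (0::complex) 1))) borel norm"
definition radN :: "real measure" where
  "radN = density lborel (\<lambda>r. ennreal (2*pi*r) * indicator {0<..<1} r)"

lemma radM_eq_radN: "radM = radN"
proof (rule measure_eqI_lessThan)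
  show "sets radM = sets borel" "sets radN = sets borel" by (simp_all add: radM_def radN_def)
  have M: "emeasure radM {x<..} = emeasure lborel (ball (0::complex) 1 \<inter> {z. x < norm z})" for x
  proof -
    have "emeasure radM {x<..} = emeasure (density lborel (indicator (ball (0::complex) 1))) (norm -` {x<..})"
      unfolding radM_def by (subst emeasure_distr) auto
    also have "\<dots> = (\<integral>\<^sup>+z. indicator (ball (0::complex) 1) z * indicator (norm -` {x<..}) z \<partial>lborel)"
      by (subst emeasure_density) auto
    also have "\<dots> = (\<integral>\<^sup>+z. indicator (ball (0::complex) 1 \<inter> {z. x < norm z}) z \<partial>lborel)"
      by (rule nn_integral_cong) (auto simp: indicator_def)
    also have "\<dots> = emeasure lborel (ball (0::complex) 1 \<inter> {z. x < norm z})"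
      by (rule nn_integral_indicator) measurable
    finally show ?thesis .
  qed
  have N: "emeasure radN {x<..} = (\<integral>\<^sup>+r. ennreal (2*pi*r) * indicator ({0<..<1} \<inter> {x<..}) r \<partial>lborel)" for x
    unfolding radN_def
    by (subst emeasure_density) (auto intro!: nn_integral_cong simp: indicator_def)
  have "emeasure radM {x<..} = emeasure radN {x<..} \<and> emeasure radM {x<..} < \<infinity>" for x
  proof (cases "x < 0")
    case True
    have "ball 0 1 \<inter> {z. x < norm z} = ball (0::complex) 1" using True by (auto intro: less_le_trans[OF _ norm_ge_zero])
    then have 1: "emeasure radM {x<..} = ennreal pi" using M[of x] by (simp add: emeasure_ball_complex)
    have "{0<..<1} \<inter> {x<..} = {0<..<1::real}" using True by auto
    then have 2: "emeasure radN {x<..} = ennreal pi"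
      using N[of x] nn_integral_has_integral_lebesgue'[OF _ has_integral_2pi_r[of 0 1]] by simp
    show ?thesis using 1 2 by simp
  next
    case False
    show ?thesis
    proof (cases "x < 1")
      case True
      have "ball 0 1 \<inter> {z. x < norm z} = ball (0::complex) 1 - cball 0 x" using False by auto
      then have "emeasure radM {x<..} = emeasure lborel (ball (0::complex) 1) - emeasure lborel (cball (0::complex) x)"
      proof -
        have "emeasure lborel (ball (0::complex) 1 - cball 0 x) = emeasure lborel (ball (0::complex) 1) - emeasure lborel (cball (0::complex) x)"
          using True False by (intro emeasure_Diff) (auto simp: emeasure_cball_complex)
        then show ?thesis using M[of x] \<open>ball 0 1 \<inter> {z. x < norm z} = _\<close> by simp
      qed
      also have "\<dots> = ennreal (pi - pi * x^2)"
        using False True by (simp add: emeasure_ball_complex emeasure_cball_complex ennreal_minus[symmetric]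
            power_le_one)
      finally have 1: "emeasure radM {x<..} = ennreal (pi - pi * x^2)" .
      have "{0<..<1} \<inter> {x<..} = {x<..<1::real}" using False by auto
      then have 2: "emeasure radN {x<..} = ennreal (pi - pi * x^2)"
        using N[of x] nn_integral_has_integral_lebesgue'[OF _ has_integral_2pi_r[of x 1]] False True by simp
      show ?thesis using 1 2 by simp
    next
      case False': False
      have "ball 0 1 \<inter> {z. x < norm z} = ({}::complex set)" using False' by auto
      then have 1: "emeasure radM {x<..} = 0" using M[of x] by simp
      have "{0<..<1} \<inter> {x<..} = ({}::real set)" using False' by auto
      then have 2: "emeasure radN {x<..} = 0"
        using N[of x] by simp
      show ?thesis using 1 2 by simp
    qed
  qed
  then show "\<And>x. emeasure radM {x<..} < \<infinity>" "\<And>x. emeasure radM {x<..} = emeasure radN {x<..}"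
    by metis+
qed

lemma nn_integral_radial:
  fixes \<phi> :: "real \<Rightarrow> ennreal"
  assumes [measurable]: "\<phi> \<in> borel_measurable borel"
  shows "(\<integral>\<^sup>+z. \<phi> (norm z) * indicator (ball (0::complex) 1) z \<partial>lborel)
       = (\<integral>\<^sup>+r. ennreal (2*pi*r) * indicator {0<..<1} r * \<phi> r \<partial>lborel)"
proof -
  have "(\<integral>\<^sup>+z. \<phi> (norm z) * indicator (ball (0::complex) 1) z \<partial>lborel) = (\<integral>\<^sup>+r. \<phi> r \<partial>radM)"
    unfolding radM_def
    by (subst nn_integral_distr, simp, simp, subst nn_integral_density) (auto simp: mult.commute)
  also have "\<dots> = (\<integral>\<^sup>+r. \<phi> r \<partial>radN)" by (simp add: radM_eq_radN)
  also have "\<dots> = (\<integral>\<^sup>+r. ennreal (2*pi*r) * indicator {0<..<1} r * \<phi> r \<partial>lborel)"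
    unfolding radN_def by (subst nn_integral_density) auto
  finally show ?thesis .
qed



lemma nn_integral_polar:
  fixes g :: "complex \<Rightarrow> ennreal"
  assumes [measurable]: "g \<in> borel_measurable borel"
  shows "(\<integral>\<^sup>+z. g z * indicator (ball 0 1) z \<partial>lborel)
       = (\<integral>\<^sup>+r. ennreal r * indicator {0<..<1} r * (\<integral>\<^sup>+t. g (of_real r * cis t) * indicator {0..2*pi} t \<partial>lborel) \<partial>lborel)"
proof -
  define \<Phi> where "\<Phi> r = (\<integral>\<^sup>+t. g (of_real r * cis t) * indicator {0..2*pi} t \<partial>lborel)" for r
  have [measurable]: "\<Phi> \<in> borel_measurable borel" unfolding \<Phi>_def by measurable
  have "ennreal (2*pi) * (\<integral>\<^sup>+z. g z * indicator (ball 0 1) z \<partial>lborel)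
      = (\<integral>\<^sup>+z. (\<integral>\<^sup>+t. g (cis t * z) * indicator (ball 0 1) (cis t * z) * indicator {0..2*pi} t \<partial>lborel) \<partial>lborel)"
    by (rule nn_integral_symmetrize[where g = "\<lambda>z. g z * indicator (ball 0 1) z"]) measurable
  also have "\<dots> = (\<integral>\<^sup>+z. \<Phi> (norm z) * indicator (ball (0::complex) 1) z \<partial>lborel)"
  proof (rule nn_integral_cong)
    fix z :: complex
    have "(\<integral>\<^sup>+t. g (cis t * z) * indicator (ball 0 1) (cis t * z) * indicator {0..2*pi} t \<partial>lborel)
        = (\<integral>\<^sup>+t. g (cis t * z) * indicator {0..2*pi} t \<partial>lborel) * indicator (ball 0 1) z"
      by (subst nn_integral_multc[symmetric]) (auto intro!: nn_integral_cong simp: norm_mult mult_ac indicator_def)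
    also have "\<dots> = \<Phi> (norm z) * indicator (ball 0 1) z"
      unfolding \<Phi>_def by (subst nn_integral_angular) auto
    finally show "(\<integral>\<^sup>+t. g (cis t * z) * indicator (ball 0 1) (cis t * z) * indicator {0..2*pi} t \<partial>lborel) = \<Phi> (norm z) * indicator (ball 0 1) z" .
  qed
  also have "\<dots> = (\<integral>\<^sup>+r. ennreal (2*pi*r) * indicator {0<..<1} r * \<Phi> r \<partial>lborel)"
    by (rule nn_integral_radial) measurable
  also have "\<dots> = ennreal (2*pi) * (\<integral>\<^sup>+r. ennreal r * indicator {0<..<1} r * \<Phi> r \<partial>lborel)"
    by (subst nn_integral_cmult[symmetric]) (auto intro!: nn_integral_cong simp: ennreal_mult mult_ac indicator_def)
  finally show ?thesis
    unfolding \<Phi>_def by (simp add: ennreal_mult_cancel_left)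
qed



lemma pointwise_H1:
  fixes h :: "complex \<Rightarrow> complex"
  assumes hol: "h holomorphic_on ball 0 1" and [measurable]: "h \<in> borel_measurable borel"
    and M: "\<And>r. 0 < r \<Longrightarrow> r < 1 \<Longrightarrow> (\<integral>\<^sup>+t. ennreal (norm (h (of_real r * cis t))) * indicator {0..2*pi} t \<partial>lborel) \<le> ennreal M"
    and z: "norm z < 1" and M0: "0 \<le> M"
  shows "norm (h z) \<le> M / (pi * (1 - norm z))"
proof -
  define R where "R = (1 + norm z) / 2"
  have R: "norm z < R" "R < 1" "0 < R" using z norm_ge_zero[of z] unfolding R_def by (auto intro: add_pos_nonneg)
  have sub: "cball 0 R \<subseteq> ball (0::complex) 1" using R by auto
  have conth: "continuous_on (ball 0 1) h" using hol holomorphic_on_imp_continuous_on by blast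
  have "((\<lambda>u. h u / (u - z)) has_contour_integral (2 * of_real pi * \<i> * h z)) (circlepath 0 R)"
    using R sub by (intro Cauchy_integral_circlepath continuous_on_subset[OF conth] holomorphic_on_subset[OF hol]) auto
  then have hi: "((\<lambda>t. h (0 + R * cis t) / ((0 + R * cis t) - z) * R * \<i> * cis t) has_integral (2 * of_real pi * \<i> * h z)) {0..2*pi}"
    unfolding circlepath_def by (subst (asm) has_contour_integral_part_circlepath_iff) auto
  define g where "g t = norm (h (of_real R * cis t)) * (R / (R - norm z))" for t
  have contg: "continuous_on {0..2*pi} g"
    unfolding g_def using R
    by (intro continuous_intros continuous_on_compose2[OF conth]) (auto simp: norm_mult)
  have bound: "norm (h (0 + R * cis t) / ((0 + R * cis t) - z) * R * \<i> * cis t) \<le> g t" for t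
  proof -
    have "R - norm z \<le> norm (R * cis t - z)"
      using norm_triangle_ineq2[of "R * cis t" z] R by (simp add: norm_mult)
    then have "norm (h (R * cis t)) / norm (R * cis t - z) \<le> norm (h (R * cis t)) / (R - norm z)"
      using R by (intro divide_left_mono) (auto intro!: mult_pos_pos)
    then have "norm (h (R * cis t)) / norm (R * cis t - z) * R \<le> norm (h (R * cis t)) / (R - norm z) * R"
      using R by (intro mult_right_mono) auto
    moreover have "norm (h (0 + R * cis t) / ((0 + R * cis t) - z) * R * \<i> * cis t) = norm (h (R * cis t)) / norm (R * cis t - z) * R"
      using R by (simp add: norm_mult norm_divide)
    ultimately show ?thesis
      by (simp add: g_def)
  qed
  have "norm (2 * of_real pi * \<i> * h z) \<le> integral {0..2*pi} g"
    using hi contg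
    by (subst integral_unique[OF hi, symmetric]) (intro integral_norm_bound_integral bound integrable_continuous_interval has_integral_integrable[OF hi]; auto)
  moreover have "integral {0..2*pi} g \<le> M * (R / (R - norm z))"
  proof -
    have gi: "(g has_integral integral {0..2*pi} g) {0..2*pi}"
      using contg by (intro integrable_integral integrable_continuous_interval)
    have "ennreal (integral {0..2*pi} g) = (\<integral>\<^sup>+t. ennreal (g t) * indicator {0..2*pi} t \<partial>lborel)"
      by (rule nn_integral_has_integral_lebesgue'[OF _ gi, symmetric]) (use R in \<open>auto simp: g_def\<close>)
    also have "\<dots> = (\<integral>\<^sup>+t. ennreal (norm (h (of_real R * cis t))) * indicator {0..2*pi} t \<partial>lborel) * ennreal (R / (R - norm z))"
      using R by (subst nn_integral_multc[symmetric]) (auto intro!: nn_integral_cong simp: g_def ennreal_mult'[symmetric] mult_ac indicator_def)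
    also have "\<dots> \<le> ennreal M * ennreal (R / (R - norm z))"
      using M[OF R(3) R(2)] by (intro mult_right_mono) auto
    finally have "ennreal (integral {0..2*pi} g) \<le> ennreal M * ennreal (R / (R - norm z))" .
    then have "ennreal (integral {0..2*pi} g) \<le> ennreal (M * (R / (R - norm z)))"
      using R M0 by (simp add: ennreal_mult del: times_divide_eq_right)
    moreover have "0 \<le> M * (R / (R - norm z))" using R M0 by simp
    ultimately show ?thesis by (simp add: ennreal_le_iff del: times_divide_eq_right)
  qed
  ultimately have "2 * pi * norm (h z) \<le> M * (R / (R - norm z))"
    by (simp add: norm_mult)
  moreover have "R / (R - norm z) \<le> 2 / (1 - norm z)"
  proof -
    have "R / (R - norm z) = (1 + norm z) / (1 - norm z)" using z unfolding R_def by (simp add: field_simps)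
    also have "\<dots> \<le> 2 / (1 - norm z)" using z by (intro divide_right_mono) auto
    finally show ?thesis .
  qed
  ultimately have "2 * pi * norm (h z) \<le> M * (2 / (1 - norm z))"
    using M0 by (meson mult_left_mono order_trans)
  then show ?thesis using z by (simp add: field_simps)
qed



lemma radial_powr_finite:
  assumes "\<beta> > -1" "C \<ge> 0"
  shows "(\<integral>\<^sup>+r. ennreal (C * (1 - r) powr \<beta>) * indicator {0<..<1} r \<partial>lborel) < \<infinity>"
proof -
  define f where "f s = ennreal (C * s powr \<beta>) * indicator {0<..<1} s" for s :: real
  have [measurable]: "f \<in> borel_measurable borel" unfolding f_def by measurable
  have "(\<integral>\<^sup>+x. f x \<partial>lborel) = ennreal \<bar>-1\<bar> * (\<integral>\<^sup>+x. f (1 + (-1) * x) \<partial>lborel)"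
    by (rule nn_integral_real_affine) auto
  also have "(\<integral>\<^sup>+x. f (1 + (-1) * x) \<partial>lborel) = (\<integral>\<^sup>+r. ennreal (C * (1 - r) powr \<beta>) * indicator {0<..<1} r \<partial>lborel)"
    by (intro nn_integral_cong) (auto simp: f_def indicator_def)
  finally have eq: "(\<integral>\<^sup>+r. ennreal (C * (1 - r) powr \<beta>) * indicator {0<..<1} r \<partial>lborel) = (\<integral>\<^sup>+x. f x \<partial>lborel)" by simp
  have hi: "((\<lambda>x. C * x powr \<beta>) has_integral (C * (1 powr (\<beta>+1) / (\<beta>+1)))) {0<..<1}"
    using has_integral_mult_right[OF has_integral_powr_from_0[of \<beta> 1], of C] assms
      has_integral_open_interval[of "\<lambda>x::real. C * x powr \<beta>" _ 0 1] by simp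
  have "(\<integral>\<^sup>+x. f x \<partial>lborel) = ennreal (C * (1 powr (\<beta>+1) / (\<beta>+1)))"
    unfolding f_def by (rule nn_integral_has_integral_lebesgue'[OF _ hi]) (use assms in auto)
  then show ?thesis using eq by simp
qed

lemma radial_finite:
  fixes \<Psi> :: "real \<Rightarrow> ennreal"
  assumes "\<beta> > -1" "C \<ge> 0" and bd: "\<And>r. 0 < r \<Longrightarrow> r < 1 \<Longrightarrow> \<Psi> r \<le> ennreal (C * (1 - r) powr \<beta>)"
  shows "(\<integral>\<^sup>+r. ennreal r * indicator {0<..<1} r * \<Psi> r \<partial>lborel) < \<infinity>"
proof -
  have "(\<integral>\<^sup>+r. ennreal r * indicator {0<..<1} r * \<Psi> r \<partial>lborel) \<le> (\<integral>\<^sup>+r. ennreal (C * (1 - r) powr \<beta>) * indicator {0<..<1} r \<partial>lborel)"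
  proof (rule nn_integral_mono)
    fix r :: real
    show "ennreal r * indicator {0<..<1} r * \<Psi> r \<le> ennreal (C * (1 - r) powr \<beta>) * indicator {0<..<1} r"
    proof (cases "0 < r \<and> r < 1")
      case True
      have "ennreal r * \<Psi> r \<le> 1 * ennreal (C * (1 - r) powr \<beta>)"
        using True bd[of r] by (intro mult_mono) auto
      then show ?thesis using True by (simp add: indicator_def)
    qed (auto simp: indicator_def)
  qed
  also have "\<dots> < \<infinity>" by (rule radial_powr_finite) fact+
  finally show ?thesis .
qed



lemma powr_le_1_plus:
  fixes a q :: real
  assumes "0 \<le> a" "0 < q" "q \<le> 1"
  shows "a powr q \<le> 1 + a"
proof (cases "a \<le> 1")
  case True
  then have "a powr q \<le> 1" using assms by (intro powr_le1) auto
  then show ?thesis using assms by simp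
next
  case False
  then have "a powr q \<le> a powr 1" using assms by (intro powr_mono) auto
  then show ?thesis using False by simp
qed

lemma powr_split_bound:
  fixes a q B :: real
  assumes "0 \<le> a" "1 \<le> q" "a \<le> B"
  shows "a powr q \<le> a * B powr (q - 1)"
proof (cases "a = 0")
  case True then show ?thesis using assms by simp
next
  case False
  then have "a powr q = a * a powr (q - 1)" using assms by (simp add: powr_diff)
  also have "\<dots> \<le> a * B powr (q - 1)"
    using assms False by (intro mult_left_mono powr_mono2) auto
  finally show ?thesis .
qed

lemma core_H1:
  fixes h :: "complex \<Rightarrow> complex"
  assumes hol: "h holomorphic_on ball 0 1" and [measurable]: "h \<in> borel_measurable borel"
    and M0: "0 \<le> M"
    and M: "\<And>r. 0 < r \<Longrightarrow> r < 1 \<Longrightarrow> (\<integral>\<^sup>+t. ennreal (norm (h (of_real r * cis t))) * indicator {0..2*pi} t \<partial>lborel) \<le> ennreal M"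
    and q: "0 < q" "q < \<alpha> + 2" and \<alpha>: "\<alpha> > -1"
  shows "(\<integral>\<^sup>+z. ennreal (norm (h z) powr q * (1 - norm z) powr \<alpha>) * indicator (ball 0 1) z \<partial>lborel) < \<infinity>"
proof -
  define \<Psi> where "\<Psi> r = (\<integral>\<^sup>+t. ennreal (norm (h (of_real r * cis t)) powr q * (1 - norm (of_real r * cis t :: complex)) powr \<alpha>) * indicator {0..2*pi} t \<partial>lborel)" for r
  have polar: "(\<integral>\<^sup>+z. ennreal (norm (h z) powr q * (1 - norm z) powr \<alpha>) * indicator (ball 0 1) z \<partial>lborel)
      = (\<integral>\<^sup>+r. ennreal r * indicator {0<..<1} r * \<Psi> r \<partial>lborel)"
    unfolding \<Psi>_def by (rule nn_integral_polar) measurable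
  have hM: "(\<integral>\<^sup>+t. ennreal (norm (h (of_real r * cis t))) * indicator {0..2*pi} t \<partial>lborel) < \<infinity>" if "0 < r" "r < 1" for r
    using M[OF that] by (simp add: le_less_trans)
  show ?thesis
  proof (cases "1 \<le> q")
    case True
    define K where "K = M / pi"
    define C where "C = M * K powr (q - 1)"
    have "(\<integral>\<^sup>+r. ennreal r * indicator {0<..<1} r * \<Psi> r \<partial>lborel) < \<infinity>"
    proof (rule radial_finite[where \<beta> = "\<alpha> + 1 - q" and C = C])
      show "\<alpha> + 1 - q > -1" using q by simp
      show "C \<ge> 0" unfolding C_def K_def using M0 by simp
      fix r :: real assume r: "0 < r" "r < 1"
      have pw: "norm (h (of_real r * cis t)) \<le> K / (1 - r)" for t
      proof -
        have "norm (h (of_real r * cis t)) \<le> M / (pi * (1 - norm (of_real r * cis t :: complex)))"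
          using r by (intro pointwise_H1[OF hol _ M _ M0]) (auto simp: norm_mult)
        then show ?thesis using r by (simp add: K_def norm_mult)
      qed
      have "\<Psi> r \<le> (\<integral>\<^sup>+t. ennreal (norm (h (of_real r * cis t))) * indicator {0..2*pi} t * ennreal (K powr (q - 1) * (1 - r) powr (\<alpha> + 1 - q)) \<partial>lborel)"
        unfolding \<Psi>_def
      proof (rule nn_integral_mono)
        fix t
        let ?a = "norm (h (of_real r * cis t))"
        have E: "(K / (1 - r)) powr (q - 1) * (1 - r) powr \<alpha> = K powr (q - 1) * (1 - r) powr (\<alpha> + 1 - q)"
        proof -
          have "(K / (1 - r)) powr (q - 1) = K powr (q - 1) / (1 - r) powr (q - 1)"
            using r M0 by (simp add: K_def powr_divide powr_mult)
          moreover have "(1 - r) powr \<alpha> / (1 - r) powr (q - 1) = (1 - r) powr (\<alpha> + 1 - q)"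
            using r by (simp add: powr_diff[symmetric] algebra_simps)
          ultimately show ?thesis by (metis times_divide_eq_left times_divide_eq_right)
        qed
        have "?a powr q * (1 - r) powr \<alpha> \<le> ?a * (K / (1 - r)) powr (q - 1) * (1 - r) powr \<alpha>"
          using True pw[of t] by (intro mult_right_mono powr_split_bound) auto
        also have "\<dots> = ?a * (K powr (q - 1) * (1 - r) powr (\<alpha> + 1 - q))"
          using E by (simp add: mult.assoc)
        finally have "?a powr q * (1 - r) powr \<alpha> \<le> ?a * (K powr (q - 1) * (1 - r) powr (\<alpha> + 1 - q))" .
        then show "ennreal (?a powr q * (1 - norm (of_real r * cis t :: complex)) powr \<alpha>) * indicator {0..2*pi} t
            \<le> ennreal ?a * indicator {0..2*pi} t * ennreal (K powr (q - 1) * (1 - r) powr (\<alpha> + 1 - q))"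
          using r by (auto simp: indicator_def norm_mult ennreal_mult'[symmetric] intro!: ennreal_leI)
      qed
      also have "\<dots> = (\<integral>\<^sup>+t. ennreal (norm (h (of_real r * cis t))) * indicator {0..2*pi} t \<partial>lborel) * ennreal (K powr (q - 1) * (1 - r) powr (\<alpha> + 1 - q))"
        by (rule nn_integral_multc) measurable
      also have "\<dots> \<le> ennreal M * ennreal (K powr (q - 1) * (1 - r) powr (\<alpha> + 1 - q))"
        using M[OF r] by (intro mult_right_mono) auto
      also have "\<dots> = ennreal (C * (1 - r) powr (\<alpha> + 1 - q))"
        using M0 by (simp add: C_def ennreal_mult'[symmetric] mult.assoc)
      finally show "\<Psi> r \<le> ennreal (C * (1 - r) powr (\<alpha> + 1 - q))" .
    qed
    then show ?thesis using polar by simp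
  next
    case False
    define C where "C = 2 * pi + M"
    have "(\<integral>\<^sup>+r. ennreal r * indicator {0<..<1} r * \<Psi> r \<partial>lborel) < \<infinity>"
    proof (rule radial_finite[where \<beta> = "\<alpha>" and C = C])
      show "\<alpha> > -1" by fact
      show "C \<ge> 0" unfolding C_def using M0 by simp
      fix r :: real assume r: "0 < r" "r < 1"
      have "\<Psi> r \<le> (\<integral>\<^sup>+t. (ennreal (norm (h (of_real r * cis t))) * indicator {0..2*pi} t + indicator {0..2*pi} t) * ennreal ((1 - r) powr \<alpha>) \<partial>lborel)"
        unfolding \<Psi>_def
      proof (rule nn_integral_mono)
        fix t
        let ?a = "norm (h (of_real r * cis t))"
        have "?a powr q * (1 - r) powr \<alpha> \<le> (?a + 1) * (1 - r) powr \<alpha>"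
          using False q powr_le_1_plus[of ?a q] by (intro mult_right_mono) auto
        then have "ennreal (?a powr q * (1 - r) powr \<alpha>) \<le> ennreal ((?a + 1) * (1 - r) powr \<alpha>)"
          by (rule ennreal_leI)
        also have "\<dots> = (ennreal ?a + 1) * ennreal ((1 - r) powr \<alpha>)"
          by (simp add: ennreal_mult' ennreal_plus)
        finally have X: "ennreal (?a powr q * (1 - r) powr \<alpha>) \<le> (ennreal ?a + 1) * ennreal ((1 - r) powr \<alpha>)" .
        show "ennreal (?a powr q * (1 - norm (of_real r * cis t :: complex)) powr \<alpha>) * indicator {0..2*pi} t
            \<le> (ennreal ?a * indicator {0..2*pi} t + indicator {0..2*pi} t) * ennreal ((1 - r) powr \<alpha>)"
          using r X by (auto simp: indicator_def norm_mult)
      qed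
      also have "\<dots> = ((\<integral>\<^sup>+t. ennreal (norm (h (of_real r * cis t))) * indicator {0..2*pi} t \<partial>lborel) + (\<integral>\<^sup>+t. indicator {0..2*pi} t \<partial>lborel)) * ennreal ((1 - r) powr \<alpha>)"
        by (subst nn_integral_multc, measurable, subst nn_integral_add) (auto)
      also have "\<dots> \<le> (ennreal M + ennreal (2*pi)) * ennreal ((1 - r) powr \<alpha>)"
        using M[OF r] by (intro mult_right_mono add_mono) auto
      also have "\<dots> = ennreal (C * (1 - r) powr \<alpha>)"
        using M0 by (simp add: C_def ennreal_mult'[symmetric] ennreal_plus[symmetric] del: ennreal_plus add.commute)
      finally show "\<Psi> r \<le> ennreal (C * (1 - r) powr \<alpha>)" .
    qed
    then show ?thesis using polar by simp
  qed
qed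



lemma core_zero_free:
  fixes g :: "complex \<Rightarrow> complex"
  assumes hol: "g holomorphic_on ball 0 1" and nz: "\<And>z. z \<in> ball 0 1 \<Longrightarrow> g z \<noteq> 0"
    and hardy: "in_hardy p g" and p: "p > 0" and s: "s > 0" "s < (\<alpha> + 2) * p" and \<alpha>: "\<alpha> > -1"
  shows "in_bergman s \<alpha> g"
proof -
  obtain L where holL: "L holomorphic_on ball 0 1" and L: "\<And>z. z \<in> ball 0 1 \<Longrightarrow> g z = exp (L z)"
    using contractible_imp_holomorphic_log[OF hol convex_imp_contractible[OF convex_ball] nz] by blast
  define h0 where "h0 z = exp (of_real p * L z)" for z
  have holh0: "h0 holomorphic_on ball 0 1" unfolding h0_def by (intro holomorphic_intros holL)
  define h where "h z = indicator (ball 0 1) z *\<^sub>R h0 z" for z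
  have hh0: "z \<in> ball 0 1 \<Longrightarrow> h z = h0 z" for z by (simp add: h_def)
  have holh: "h holomorphic_on ball 0 1" using holomorphic_transform[OF holh0] hh0 by metis
  have [measurable]: "h \<in> borel_measurable borel"
    unfolding h_def by (intro borel_measurable_continuous_on_indicator holomorphic_on_imp_continuous_on holh0) auto
  have normh: "norm (h z) = norm (g z) powr p" if "z \<in> ball 0 1" for z
  proof -
    have "norm (h z) = exp (p * Re (L z))" using that by (simp add: hh0 h0_def norm_exp_eq_Re)
    also have "\<dots> = exp (Re (L z)) powr p" by (simp add: powr_def)
    also have "exp (Re (L z)) = norm (g z)" using that by (simp add: L norm_exp_eq_Re)
    finally show ?thesis .
  qed
  define S where "S = (SUP r\<in>{0<..<1}. \<integral>\<^sup>+ t. ennreal (norm (g (complex_of_real r * cis t)) powr p) * indicator {0..2*pi} t \<partial>lborel)"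
  have S: "S < \<infinity>" and holg: "g holomorphic_on ball 0 1" using hardy unfolding in_hardy_def S_def by auto
  define M where "M = enn2real S"
  have SM: "S = ennreal M" using S by (simp add: M_def less_top)
  have M0: "0 \<le> M" by (simp add: M_def)
  have Mb: "(\<integral>\<^sup>+t. ennreal (norm (h (of_real r * cis t))) * indicator {0..2*pi} t \<partial>lborel) \<le> ennreal M"
    if r: "0 < r" "r < 1" for r
  proof -
    have "(\<integral>\<^sup>+t. ennreal (norm (h (of_real r * cis t))) * indicator {0..2*pi} t \<partial>lborel)
        = (\<integral>\<^sup>+ t. ennreal (norm (g (complex_of_real r * cis t)) powr p) * indicator {0..2*pi} t \<partial>lborel)"
      using r by (intro nn_integral_cong) (simp add: normh norm_mult)
    also have "\<dots> \<le> S" unfolding S_def using r by (intro SUP_upper) auto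
    finally show ?thesis using SM by simp
  qed
  have q: "0 < s / p" "s / p < \<alpha> + 2" using s p by (auto simp: field_simps)
  have fin: "(\<integral>\<^sup>+z. ennreal (norm (h z) powr (s / p) * (1 - norm z) powr \<alpha>) * indicator (ball 0 1) z \<partial>lborel) < \<infinity>"
    by (rule core_H1[OF holh _ M0 Mb q \<alpha>]) auto
  have "(\<integral>\<^sup>+z. ennreal (norm (h z) powr (s / p) * (1 - norm z) powr \<alpha>) * indicator (ball 0 1) z \<partial>lborel)
      = (\<integral>\<^sup>+ z. ennreal (norm (g z) powr s * (1 - norm z) powr \<alpha>) * indicator (ball 0 1) z \<partial>lborel)"
  proof (rule nn_integral_cong)
    fix z :: complex
    show "ennreal (norm (h z) powr (s / p) * (1 - norm z) powr \<alpha>) * indicator (ball 0 1) z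
        = ennreal (norm (g z) powr s * (1 - norm z) powr \<alpha>) * indicator (ball 0 1) z"
      using p by (cases "z \<in> ball 0 1") (simp_all add: normh powr_powr)
  qed
  then show ?thesis using fin holg unfolding in_bergman_def by simp
qed



lemma powr_add_le:
  fixes a b p :: real
  assumes "0 \<le> a" "0 \<le> b" "0 < p"
  shows "(a + b) powr p \<le> 2 powr p * (a powr p + b powr p)"
proof -
  have "(a + b) powr p \<le> (2 * max a b) powr p"
    using assms by (intro powr_mono2) auto
  also have "\<dots> = 2 powr p * max a b powr p" using assms by (simp add: powr_mult)
  also have "max a b powr p \<le> a powr p + b powr p"
    by (cases "a \<le> b") (auto simp: max_def)
  then have "2 powr p * max a b powr p \<le> 2 powr p * (a powr p + b powr p)"
    by (intro mult_left_mono) auto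
  finally show ?thesis .
qed

lemma norm_add_powr_le:
  fixes u v :: complex
  assumes "0 < p"
  shows "norm (u + v) powr p \<le> 2 powr p * (norm u powr p + norm v powr p)"
proof -
  have "norm (u + v) powr p \<le> (norm u + norm v) powr p"
    using assms by (intro powr_mono2 norm_triangle_ineq) auto
  also have "\<dots> \<le> 2 powr p * (norm u powr p + norm v powr p)"
    using assms by (intro powr_add_le) auto
  finally show ?thesis .
qed

lemma in_hardy_add_const:
  assumes "in_hardy p f" "p > 0"
  shows "in_hardy p (\<lambda>z. f z + c)"
proof -
  have holf: "f holomorphic_on ball 0 1" using assms by (simp add: in_hardy_def)
  define f' where "f' z = indicator (ball 0 1) z *\<^sub>R f z" for z
  have [measurable]: "f' \<in> borel_measurable borel"
    unfolding f'_def by (intro borel_measurable_continuous_on_indicator holomorphic_on_imp_continuous_on holf) auto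
  define S where "S = (SUP r\<in>{0<..<1}. \<integral>\<^sup>+ t. ennreal (norm (f (complex_of_real r * cis t)) powr p) * indicator {0..2*pi} t \<partial>lborel)"
  have S: "S < \<infinity>" using assms unfolding in_hardy_def S_def by auto
  have bd: "(\<integral>\<^sup>+ t. ennreal (norm (f (complex_of_real r * cis t) + c) powr p) * indicator {0..2*pi} t \<partial>lborel)
      \<le> ennreal (2 powr p) * (S + ennreal (norm c powr p * (2*pi)))" if r: "r \<in> {0<..<1}" for r
  proof -
    have in_ball: "complex_of_real r * cis t \<in> ball 0 1" for t using r by (simp add: norm_mult)
    have "(\<integral>\<^sup>+ t. ennreal (norm (f (complex_of_real r * cis t) + c) powr p) * indicator {0..2*pi} t \<partial>lborel)
        \<le> (\<integral>\<^sup>+ t. ennreal (2 powr p) * (ennreal (norm (f' (complex_of_real r * cis t)) powr p) * indicator {0..2*pi} t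
              + ennreal (norm c powr p) * indicator {0..2*pi} t) \<partial>lborel)"
    proof (rule nn_integral_mono)
      fix t
      have "ennreal (norm (f (complex_of_real r * cis t) + c) powr p)
          \<le> ennreal (2 powr p * (norm (f (complex_of_real r * cis t)) powr p + norm c powr p))"
        using assms(2) by (intro ennreal_leI norm_add_powr_le)
      also have "\<dots> = ennreal (2 powr p) * (ennreal (norm (f' (complex_of_real r * cis t)) powr p) + ennreal (norm c powr p))"
        using in_ball[of t] by (simp add: f'_def ennreal_mult' ennreal_plus)
      finally show "ennreal (norm (f (complex_of_real r * cis t) + c) powr p) * indicator {0..2*pi} t
          \<le> ennreal (2 powr p) * (ennreal (norm (f' (complex_of_real r * cis t)) powr p) * indicator {0..2*pi} t
              + ennreal (norm c powr p) * indicator {0..2*pi} t)"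
        by (auto simp: indicator_def)
    qed
    also have "\<dots> = ennreal (2 powr p) * ((\<integral>\<^sup>+ t. ennreal (norm (f' (complex_of_real r * cis t)) powr p) * indicator {0..2*pi} t \<partial>lborel)
              + (\<integral>\<^sup>+ t. ennreal (norm c powr p) * indicator {0..2*pi} t \<partial>lborel))"
      by (subst nn_integral_cmult, measurable, subst nn_integral_add) auto
    also have "(\<integral>\<^sup>+ t. ennreal (norm (f' (complex_of_real r * cis t)) powr p) * indicator {0..2*pi} t \<partial>lborel)
        = (\<integral>\<^sup>+ t. ennreal (norm (f (complex_of_real r * cis t)) powr p) * indicator {0..2*pi} t \<partial>lborel)"
      using in_ball by (intro nn_integral_cong) (simp add: f'_def)
    also have "\<dots> \<le> S" unfolding S_def using r by (intro SUP_upper) auto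
    also have "(\<integral>\<^sup>+ t. ennreal (norm c powr p) * indicator {0..2*pi} t \<partial>lborel) = ennreal (norm c powr p * (2*pi))"
      by (simp add: nn_integral_cmult_indicator ennreal_mult')
    finally show ?thesis by (simp add: add_right_mono mult_left_mono)
  qed
  have "(SUP r\<in>{0<..<1}. \<integral>\<^sup>+ t. ennreal (norm (f (complex_of_real r * cis t) + c) powr p) * indicator {0..2*pi} t \<partial>lborel)
      \<le> ennreal (2 powr p) * (S + ennreal (norm c powr p * (2*pi)))"
    by (rule SUP_least) (rule bd)
  also have "\<dots> < \<infinity>" using S by (simp add: ennreal_mult_less_top)
  finally show ?thesis
    using holf unfolding in_hardy_def by (auto intro: holomorphic_intros)
qed



lemma weight_finite:
  assumes "\<alpha> > -1"
  shows "(\<integral>\<^sup>+z. ennreal ((1 - norm z) powr \<alpha>) * indicator (ball (0::complex) 1) z \<partial>lborel) < \<infinity>"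
proof -
  have "(\<integral>\<^sup>+z. ennreal (norm ((\<lambda>_. 1::complex) z) powr 1 * (1 - norm z) powr \<alpha>) * indicator (ball (0::complex) 1) z \<partial>lborel) < \<infinity>"
    by (rule core_H1[where M = "2*pi" and h = "\<lambda>_. 1"]) (use assms in \<open>auto simp: nn_integral_cmult_indicator\<close>)
  then show ?thesis by simp
qed

lemma in_bergman_add_const:
  assumes "in_bergman s \<alpha> g" "s > 0" "\<alpha> > -1"
  shows "in_bergman s \<alpha> (\<lambda>z. g z + c)"
proof -
  have holg: "g holomorphic_on ball 0 1" using assms by (simp add: in_bergman_def)
  define g' where "g' z = indicator (ball 0 1) z *\<^sub>R g z" for z
  have [measurable]: "g' \<in> borel_measurable borel"
    unfolding g'_def by (intro borel_measurable_continuous_on_indicator holomorphic_on_imp_continuous_on holg) auto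
  define B where "B = (\<integral>\<^sup>+ z. ennreal (norm (g z) powr s * (1 - norm z) powr \<alpha>) * indicator (ball 0 1) z \<partial>lborel)"
  have B: "B < \<infinity>" using assms unfolding in_bergman_def B_def by auto
  define W where "W = (\<integral>\<^sup>+z. ennreal ((1 - norm z) powr \<alpha>) * indicator (ball (0::complex) 1) z \<partial>lborel)"
  have W: "W < \<infinity>" unfolding W_def using weight_finite[OF assms(3)] .
  have "(\<integral>\<^sup>+ z. ennreal (norm (g z + c) powr s * (1 - norm z) powr \<alpha>) * indicator (ball 0 1) z \<partial>lborel)
      \<le> (\<integral>\<^sup>+ z. ennreal (2 powr s) * (ennreal (norm (g' z) powr s * (1 - norm z) powr \<alpha>) * indicator (ball 0 1) z
          + ennreal (norm c powr s) * (ennreal ((1 - norm z) powr \<alpha>) * indicator (ball 0 1) z)) \<partial>lborel)"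
  proof (rule nn_integral_mono)
    fix z :: complex
    show "ennreal (norm (g z + c) powr s * (1 - norm z) powr \<alpha>) * indicator (ball 0 1) z
      \<le> ennreal (2 powr s) * (ennreal (norm (g' z) powr s * (1 - norm z) powr \<alpha>) * indicator (ball 0 1) z
          + ennreal (norm c powr s) * (ennreal ((1 - norm z) powr \<alpha>) * indicator (ball 0 1) z))"
    proof (cases "z \<in> ball 0 1")
      case True
      have "norm (g z + c) powr s * (1 - norm z) powr \<alpha> \<le> 2 powr s * (norm (g z) powr s + norm c powr s) * (1 - norm z) powr \<alpha>"
        using assms(2) by (intro mult_right_mono norm_add_powr_le) auto
      then have "ennreal (norm (g z + c) powr s * (1 - norm z) powr \<alpha>) \<le> ennreal (2 powr s * (norm (g z) powr s + norm c powr s) * (1 - norm z) powr \<alpha>)"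
        by (rule ennreal_leI)
      also have "\<dots> = ennreal (2 powr s) * (ennreal (norm (g' z) powr s * (1 - norm z) powr \<alpha>) + ennreal (norm c powr s) * ennreal ((1 - norm z) powr \<alpha>))"
        using True by (simp add: g'_def ennreal_mult'[symmetric] ennreal_plus[symmetric] algebra_simps del: ennreal_plus)
      finally show ?thesis using True by simp
    qed simp
  qed
  also have "\<dots> = ennreal (2 powr s) * ((\<integral>\<^sup>+ z. ennreal (norm (g' z) powr s * (1 - norm z) powr \<alpha>) * indicator (ball 0 1) z \<partial>lborel)
          + ennreal (norm c powr s) * W)"
    unfolding W_def by (subst nn_integral_cmult, measurable, subst nn_integral_add, measurable, subst nn_integral_cmult) auto
  also have "(\<integral>\<^sup>+ z. ennreal (norm (g' z) powr s * (1 - norm z) powr \<alpha>) * indicator (ball 0 1) z \<partial>lborel) = B"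
    unfolding B_def by (intro nn_integral_cong) (simp add: g'_def indicator_def)
  also have "ennreal (2 powr s) * (B + ennreal (norm c powr s) * W) < \<infinity>"
    using B W by (simp add: ennreal_mult_less_top)
  finally show ?thesis
    using holg unfolding in_bergman_def by (auto intro: holomorphic_intros)
qed



lemma one_minus_cos_le: "1 - cos (t::real) \<le> t^2 / 2"
proof -
  have "cos t = 1 - 2 * sin (t/2) ^ 2" using cos_double_sin[of "t/2"] by simp
  moreover have "sin (t/2) ^ 2 \<le> (t/2)^2"
    using abs_sin_x_le_abs_x[of "t/2"] by (metis abs_ge_zero power2_abs power_mono)
  ultimately show ?thesis by (simp add: power_divide)
qed

lemma exp_sq_bound: "0 \<le> (x::real) \<Longrightarrow> x^2 / 4 \<le> exp x"
proof -
  assume x: "0 \<le> x"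
  have "x / 2 \<le> exp (x/2)" using exp_ge_add_one_self[of "x/2"] by linarith
  then have "(x/2)^2 \<le> exp (x/2) ^ 2" using x by (intro power_mono) auto
  also have "exp (x/2) ^ 2 = exp x" by (simp add: exp_double[symmetric])
  finally show ?thesis by (simp add: power_divide)
qed

definition f0 :: "complex \<Rightarrow> complex" where
  "f0 z = exp ((1 + z) / (1 - z))"

lemma f0_hol: "f0 holomorphic_on ball 0 1"
proof -
  have "(\<lambda>z. exp ((1 + z) / (1 - z))) holomorphic_on ball 0 1"
    by (intro holomorphic_intros) (auto simp: dist_norm)
  then show ?thesis unfolding f0_def by simp
qed

lemma f0_not_hardy:
  assumes p: "p > 0"
  shows "\<not> in_hardy p f0"
proof
  assume "in_hardy p f0"
  then have S: "(SUP r\<in>{0<..<1}. \<integral>\<^sup>+ t. ennreal (norm (f0 (complex_of_real r * cis t)) powr p) * indicator {0..2*pi} t \<partial>lborel) < \<infinity>"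
    (is "?S < _") unfolding in_hardy_def by auto
  define M where "M = enn2real ?S"
  have SM: "?S = ennreal M" using S by (simp add: M_def less_top)
  have M0: "0 \<le> M" by (simp add: M_def)
  define \<delta> where "\<delta> = min (1/2) (p^2 / (16 * (M + 1)))"
  have \<delta>1: "0 < \<delta>" unfolding \<delta>_def using p M0 by simp
  have \<delta>2: "\<delta> \<le> 1/2" unfolding \<delta>_def by (rule min.cobounded1)
  have \<delta>3: "\<delta> \<le> p^2 / (16 * (M + 1))" unfolding \<delta>_def by (rule min.cobounded2)
  note \<delta> = \<delta>1 \<delta>2 \<delta>3
  define r where "r = 1 - \<delta>"
  have r: "0 < r" "r < 1" using \<delta> by (auto simp: r_def)
  have pt: "p^2 / (16 * \<delta>^2) \<le> norm (f0 (complex_of_real r * cis t)) powr p" if t: "0 \<le> t" "t \<le> \<delta>" for t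
  proof -
    define D where "D = (1 - r * cos t)^2 + (r * sin t)^2"
    have sc: "(sin t)^2 + (cos t)^2 = 1" by simp
    have sc': "sin t * sin t + cos t * cos t = 1" using sc by (simp add: power2_eq_square)
    have gen1: "(1 - r*x)^2 + (r*y)^2 = 1 - 2*r*x + r^2*(y^2+x^2)" for x y :: real
      by (simp add: power2_eq_square algebra_simps)
    have D': "D = 1 - 2*r*cos t + r^2" unfolding D_def gen1 sc by simp
    then have D: "D = \<delta>^2 + 2 * r * (1 - cos t)"
      unfolding r_def by (simp add: power2_eq_square algebra_simps)
    have "D \<le> \<delta>^2 + 2 * 1 * (t^2/2)"
      unfolding D using r one_minus_cos_le[of t] by (intro add_left_mono mult_mono) auto
    also have "\<dots> \<le> \<delta>^2 + \<delta>^2" using t by (simp add: power_mono)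
    finally have Dle: "D \<le> 2 * \<delta>^2" by simp
    have Dpos: "0 < D" unfolding D using \<delta> r by (intro add_pos_nonneg mult_nonneg_nonneg) auto
    have num: "\<delta> \<le> 1 - r^2" using \<delta> unfolding r_def by (simp add: power2_eq_square algebra_simps)
    have Re_eq: "Re ((1 + complex_of_real r * cis t) / (1 - complex_of_real r * cis t)) = (1 - r^2) / D"
    proof -
      have gen2: "(1 + r * x) * (1 - r * x) + r * y * (- (r * y)) = 1 - r^2 * (y^2 + x^2)" for x y :: real
        by (simp add: power2_eq_square algebra_simps)
      have "(1 + r * cos t) * (1 - r * cos t) + r * sin t * (- (r * sin t)) = 1 - r^2 * ((sin t)^2 + (cos t)^2)"
        by (rule gen2)
      also have "\<dots> = 1 - r^2" using sc by simp
      finally have N: "(1 + r * cos t) * (1 - r * cos t) + r * sin t * (- (r * sin t)) = 1 - r^2" .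
      show ?thesis unfolding D_def Re_divide using N by (simp add: cis.sel)
    qed
    have "1 / (2 * \<delta>) \<le> (1 - r^2) / D"
    proof -
      have "1 / (2 * \<delta>) = \<delta> / (2 * \<delta>^2)" using \<delta> by (simp add: power2_eq_square)
      also have "\<dots> \<le> (1 - r^2) / (2 * \<delta>^2)" using num \<delta> by (intro divide_right_mono) auto
      also have "\<dots> \<le> (1 - r^2) / D" using Dle Dpos num \<delta> by (intro divide_left_mono) auto
      finally show ?thesis .
    qed
    then have H: "1 / (2 * \<delta>) \<le> Re ((1 + complex_of_real r * cis t) / (1 - complex_of_real r * cis t))"
      using Re_eq by simp
    have "p / (2 * \<delta>) = p * (1 / (2 * \<delta>))" by simp
    also have "\<dots> \<le> p * Re ((1 + complex_of_real r * cis t) / (1 - complex_of_real r * cis t))"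
      using H p by (intro mult_left_mono) auto
    finally have H2: "p / (2 * \<delta>) \<le> p * Re ((1 + complex_of_real r * cis t) / (1 - complex_of_real r * cis t))" .
    have nf: "norm (f0 (complex_of_real r * cis t)) powr p = exp (p * Re ((1 + complex_of_real r * cis t) / (1 - complex_of_real r * cis t)))"
      unfolding f0_def norm_exp_eq_Re powr_def by (simp add: mult.commute)
    have "exp (p / (2 * \<delta>)) \<le> norm (f0 (complex_of_real r * cis t)) powr p"
      unfolding nf using H2 by simp
    moreover have "p^2 / (16 * \<delta>^2) \<le> exp (p / (2 * \<delta>))"
      using exp_sq_bound[of "p / (2 * \<delta>)"] p \<delta> by (simp add: power_divide power_mult_distrib)
    ultimately show ?thesis by linarith
  qed
  have "ennreal (p^2 / (16 * \<delta>^2)) * ennreal \<delta> = (\<integral>\<^sup>+ t. ennreal (p^2 / (16 * \<delta>^2)) * indicator {0..\<delta>} t \<partial>lborel)"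
    using \<delta> by (simp add: nn_integral_cmult_indicator)
  also have "\<dots> \<le> (\<integral>\<^sup>+ t. ennreal (norm (f0 (complex_of_real r * cis t)) powr p) * indicator {0..2*pi} t \<partial>lborel)"
  proof (rule nn_integral_mono)
    fix t
    have "\<delta> \<le> 2 * pi" using \<delta> pi_gt3 by linarith
    then show "ennreal (p^2 / (16 * \<delta>^2)) * indicator {0..\<delta>} t \<le> ennreal (norm (f0 (complex_of_real r * cis t)) powr p) * indicator {0..2*pi} t"
      using pt[of t] by (auto simp: indicator_def intro!: ennreal_leI)
  qed
  also have "\<dots> \<le> ?S" using r by (intro SUP_upper) auto
  finally have "ennreal (p^2 / (16 * \<delta>^2)) * ennreal \<delta> \<le> ennreal M" using SM by simp
  moreover have "ennreal (p^2 / (16 * \<delta>^2) * \<delta>) = ennreal (p^2 / (16 * \<delta>^2)) * ennreal \<delta>"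
    by (rule ennreal_mult) (use \<delta> in auto)
  ultimately have "ennreal (p^2 / (16 * \<delta>^2) * \<delta>) \<le> ennreal M" by simp
  then have le: "p^2 / (16 * \<delta>^2) * \<delta> \<le> M" using M0 by (simp add: ennreal_le_iff)
  have "p^2 / (16 * \<delta>^2) * \<delta> = p^2 / (16 * \<delta>)" using \<delta> by (simp add: power2_eq_square field_simps)
  also have "\<dots> \<ge> M + 1"
  proof -
    have "16 * \<delta> * (M + 1) \<le> p^2" using \<delta>(3) M0 by (simp add: field_simps)
    then show ?thesis using \<delta> M0 by (simp add: field_simps)
  qed
  finally show False using le by simp
qed

lemma hardy_number_f0: "hardy_number f0 = 0"
proof -
  have E: "{ereal p |p. p > 0 \<and> in_hardy p f0} = {}" using f0_not_hardy by auto
  show ?thesis unfolding hardy_number_def E by simp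
qed



theorem lemma2p12:
  fixes D :: "complex set" and \<alpha> :: real
  assumes "open D" and "connected D" and "D \<noteq> {}"
    and "\<alpha> > -1"
  shows "hardy_number_dom D \<le> bergman_number_dom \<alpha> D / ereal (\<alpha> + 2)"
proof -
  define H where "H = hardy_number_dom D"
  define B where "B = bergman_number_dom \<alpha> D"
  have \<alpha>: "\<alpha> > -1" by fact
  have a2: "\<alpha> + 2 > 0" using \<alpha> by simp
  have B0: "0 \<le> B" unfolding B_def bergman_number_dom_def by (intro Sup_upper) auto
  have Hle: "H \<le> hardy_number f" if "f \<in> Hol_disc D" for f
    unfolding H_def hardy_number_dom_def using that by (intro INF_lower)
  have nonneg: "0 \<le> B / ereal (\<alpha> + 2)"
  proof (cases B)
    case (real b)
    then show ?thesis using B0 a2 by simp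
  next
    case PInf
    then show ?thesis using a2 by simp
  next
    case MInf
    then show ?thesis using B0 by simp
  qed
  show ?thesis
  proof (cases "D = UNIV")
    case True
    have "f0 \<in> Hol_disc D" using True f0_hol by (simp add: Hol_disc_def)
    then have "H \<le> 0" using Hle hardy_number_f0 by metis
    then show ?thesis using nonneg unfolding H_def B_def by simp
  next
    case False
    then obtain c where c: "c \<notin> D" by auto
    have claim: "ereal s \<le> B" if s: "0 < s" and p: "0 < p" "ereal p < H" "s < (\<alpha> + 2) * p" for s p
    proof -
      have "\<forall>f\<in>Hol_disc D. in_bergman s \<alpha> f"
      proof
        fix f assume f: "f \<in> Hol_disc D"
        have holf: "f holomorphic_on ball 0 1" and fD: "\<And>z. z \<in> ball 0 1 \<Longrightarrow> f z \<in> D"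
          using f by (auto simp: Hol_disc_def)
        have "ereal p < hardy_number f" using Hle[OF f] p by simp
        then have "ereal p < Sup ({0} \<union> {ereal p |p. p > 0 \<and> in_hardy p f})"
          unfolding hardy_number_def .
        then obtain x where x: "x \<in> {0} \<union> {ereal p |p. p > 0 \<and> in_hardy p f}" "ereal p < x"
          using less_Sup_iff[THEN iffD1] by blast
        then obtain p' where p': "p' > 0" "in_hardy p' f" "p < p'" using p by auto
        define g where "g z = f z + (- c)" for z
        have hg: "in_hardy p' g" unfolding g_def by (rule in_hardy_add_const[OF p'(2) p'(1)])
        have holg: "g holomorphic_on ball 0 1" unfolding g_def by (intro holomorphic_intros holf)
        have nz: "g z \<noteq> 0" if "z \<in> ball 0 1" for z
          using fD[OF that] c unfolding g_def by auto
        have "s < (\<alpha> + 2) * p'" using p'(3) a2 p(3) by (smt (verit) mult_strict_left_mono)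
        then have "in_bergman s \<alpha> g" by (intro core_zero_free[OF holg nz hg p'(1) s _ \<alpha>])
        then have "in_bergman s \<alpha> (\<lambda>z. g z + c)" by (rule in_bergman_add_const[OF _ s \<alpha>])
        moreover have "(\<lambda>z. g z + c) = f" by (simp add: g_def)
        ultimately show "in_bergman s \<alpha> f" by simp
      qed
      then show ?thesis unfolding B_def bergman_number_dom_def using s by (intro Sup_upper) auto
    qed
    show ?thesis
    proof (rule ccontr)
      assume "\<not> ?thesis"
      then have lt: "B / ereal (\<alpha> + 2) < H" unfolding H_def B_def by simp
      show False
      proof (cases B)
        case PInf
        then show False using lt a2 by simp
      next
        case MInf
        then show False using B0 by simp
      next
        case (real b)
        have b0: "0 \<le> b" using B0 real by simp
        have "ereal (b / (\<alpha> + 2)) < H" using lt real a2 by simp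
        then obtain p where p1: "ereal (b / (\<alpha> + 2)) < ereal p" and p2: "ereal p < H"
          using ereal_dense2 by blast
        have "b / (\<alpha> + 2) < p" using p1 by simp
        then have bp: "b < (\<alpha> + 2) * p" using a2 by (simp add: divide_less_eq mult.commute)
        have p0: "0 < p" using \<open>b / (\<alpha> + 2) < p\<close> b0 a2 by (smt (verit) divide_nonneg_pos)
        define s where "s = (b + (\<alpha> + 2) * p) / 2"
        have s0: "0 < s" unfolding s_def using bp b0 by simp
        have s1: "s < (\<alpha> + 2) * p" unfolding s_def using bp by (simp add: field_simps)
        have "ereal s \<le> B" by (rule claim[OF s0 p0 p2 s1])
        then show False using real bp unfolding s_def by simp
      qed
    qed
  qed
qed


end
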